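(* Let $q\neq-1$ and $r$ be real parameters, $n\ge 0$, $k\ge 0$. The $w_r$-weight $u(n,k,s,r)$ of the set of all tilings of an $n$-board with exactly $k$ dominoes is $$u(n,k,s,r)=q^{k^2}\begin{bmatrix} n-k\\ k\end{bmatrix}(1+q^{k+1}r)\cdots(1+q^{n-k}r)\,s^kx^{n-2k}$$ for $0\le k\le\lfloor n/2\rfloor$, and $u(n,k,s,r)=0$ for $k>\lfloor n/2\rfloor$.
   Context: An $n$-board is a $1\times n$ rectangle with cells numbered $1,\dots,n$, tiled by white squares, black squares (each covering one cell) and dominoes (covering two adjacent cells). The weight $w_r$: a white square has weight $x$; a black square at cell $i$ has weight $q^i r x$; a domino covering cells $i-1,i$ has weight $q^{i-1}s$. The weight of a tiling is the product of the weights of its tiles; the weight of a set of tilings is the sum of the weights. Notation: $[m]=1+q+\cdots+q^{m-1}$, $[m]!=[1][2]\cdots[m]$, and $\begin{bmatrix} m\\ j\end{bmatrix}=\frac{[m]!}{[j]![m-j]!}$ for $0\le j\le m$. Empty products equal $1$. *)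

theory Defs
  imports Main "HOL.Real"
begin

text \<open>Tiles of a 1 x n board, listed from left to right:
  white square, black square, domino.\<close>
datatype tile = White | Black | Domino

fun tile_len :: "tile \<Rightarrow> nat" where
  "tile_len White = 1" | "tile_len Black = 1" | "tile_len Domino = 2"

definition tiling_len :: "tile list \<Rightarrow> nat" where
  "tiling_len ts = (\<Sum>t\<leftarrow>ts. tile_len t)"

definition num_dominoes :: "tile list \<Rightarrow> nat" where
  "num_dominoes ts = length (filter (\<lambda>t. t = Domino) ts)"

definition tilings :: "nat \<Rightarrow> nat \<Rightarrow> tile list set" where
  "tilings n k = {ts. tiling_len ts = n \<and> num_dominoes ts = k}"

text \<open>Weight w_r of a tiling whose first tile starts at cell p+1
  (p cells already covered).\<close>
fun wr_from :: "real \<Rightarrow> real \<Rightarrow> real \<Rightarrow> real \<Rightarrow> nat \<Rightarrow> tile list \<Rightarrow> real" where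
  "wr_from q r s x p [] = 1"
| "wr_from q r s x p (White # ts) = x * wr_from q r s x (p + 1) ts"
| "wr_from q r s x p (Black # ts) = q ^ (p + 1) * r * x * wr_from q r s x (p + 1) ts"
| "wr_from q r s x p (Domino # ts) = q ^ (p + 1) * s * wr_from q r s x (p + 2) ts"

definition wr :: "real \<Rightarrow> real \<Rightarrow> real \<Rightarrow> real \<Rightarrow> tile list \<Rightarrow> real" where
  "wr q r s x ts = wr_from q r s x 0 ts"

definition u :: "real \<Rightarrow> real \<Rightarrow> nat \<Rightarrow> nat \<Rightarrow> real \<Rightarrow> real \<Rightarrow> real" where
  "u q x n k s r = (\<Sum>ts\<in>tilings n k. wr q r s x ts)"

definition qint :: "real \<Rightarrow> nat \<Rightarrow> real" where
  "qint q m = (\<Sum>i<m. q ^ i)"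

definition qfact :: "real \<Rightarrow> nat \<Rightarrow> real" where
  "qfact q m = (\<Prod>i=1..m. qint q i)"

definition qbinom :: "real \<Rightarrow> nat \<Rightarrow> nat \<Rightarrow> real" where
  "qbinom q m j = qfact q m / (qfact q j * qfact q (m - j))"

end

theory Submission
  imports Defs Complex_Main
begin

lemma qint_add: "qint q (a + b) = qint q a + q ^ a * qint q b"
  by (induction b) (simp_all add: qint_def power_add algebra_simps)

lemma qint_geom: "qint q i * (1 - q) = 1 - q ^ i"
proof (induction i)
  case 0 thus ?case by (simp add: qint_def)
next
  case (Suc i)
  have "qint q (Suc i) = qint q i + q ^ i" by (simp add: qint_def)
  hence "qint q (Suc i) * (1 - q) = qint q i * (1 - q) + q^i * (1 - q)" by (simp add: algebra_simps)
  also have "\<dots> = 1 - q ^ Suc i" using Suc by (simp add: algebra_simps)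
  finally show ?case .
qed

lemma qint_nz:
  fixes q :: real
  assumes "q \<noteq> -1" "i \<ge> 1"
  shows "qint q i \<noteq> 0"
proof (cases "q = 1")
  case True thus ?thesis using assms by (simp add: qint_def)
next
  case False
  show ?thesis
  proof
    assume "qint q i = 0"
    hence "q ^ i = 1" using qint_geom[of q i] by simp
    hence "\<bar>q\<bar> = 1" using power_eq_1_iff[of q i] assms by auto
    thus False using False assms by (auto simp: abs_if split: if_splits)
  qed
qed

lemma qfact_Suc: "qfact q (Suc m) = qfact q m * qint q (Suc m)"
  by (simp add: qfact_def)

lemma qfact_nz: "q \<noteq> -1 \<Longrightarrow> qfact q m \<noteq> (0::real)"
  by (induction m) (simp_all add: qfact_Suc qint_nz qfact_def[of q 0])

lemma qbinom_0: "q \<noteq> -1 \<Longrightarrow> qbinom q m 0 = 1"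
  by (simp add: qbinom_def qfact_def[of q 0] qfact_nz)

lemma qbinom_diag: "q \<noteq> -1 \<Longrightarrow> qbinom q m m = 1"
  by (simp add: qbinom_def qfact_def[of q 0] qfact_nz)

lemma pascal:
  fixes q :: real
  assumes q: "q \<noteq> -1"
  shows "qbinom q (Suc k' + j + 1) (Suc k') = qbinom q (Suc k' + j) (Suc k') + q ^ (j+1) * qbinom q (Suc k' + j) k'"
    and "qbinom q (Suc k' + j + 1) (Suc k') = q ^ (Suc k') * qbinom q (Suc k' + j) (Suc k') + qbinom q (Suc k' + j) k'"
proof -
  define m where "m = Suc k' + j"
  have e1: "Suc m - Suc k' = Suc j" "m - Suc k' = j" "m - k' = Suc j" "Suc k' + j + 1 = Suc m" by (auto simp: m_def)
  have fm: "qfact q (Suc m) = qfact q m * qint q (Suc m)" by (rule qfact_Suc)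
  have fk: "qfact q (Suc k') = qfact q k' * qint q (Suc k')" by (rule qfact_Suc)
  have fj: "qfact q (Suc j) = qfact q j * qint q (Suc j)" by (rule qfact_Suc)
  have a: "qint q (Suc m) = qint q (Suc j) + q ^ (Suc j) * qint q (Suc k')"
    using qint_add[of q "Suc j" "Suc k'"] by (simp add: m_def ac_simps)
  have b: "qint q (Suc m) = qint q (Suc k') + q ^ (Suc k') * qint q (Suc j)"
    using qint_add[of q "Suc k'" "Suc j"] by (simp add: m_def ac_simps)
  have nz: "qfact q k' \<noteq> 0" "qfact q j \<noteq> 0" "qfact q m \<noteq> 0"
     "qint q (Suc k') \<noteq> 0" "qint q (Suc j) \<noteq> 0"
    using q by (auto simp: qfact_nz qint_nz)
  show "qbinom q (Suc k' + j + 1) (Suc k') = qbinom q (Suc k' + j) (Suc k') + q ^ (j+1) * qbinom q (Suc k' + j) k'"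
    unfolding qbinom_def m_def[symmetric] e1 using nz
    by (simp add: fm fk fj a e1 field_simps)
  show "qbinom q (Suc k' + j + 1) (Suc k') = q ^ (Suc k') * qbinom q (Suc k' + j) (Suc k') + qbinom q (Suc k' + j) k'"
    unfolding qbinom_def m_def[symmetric] e1 using nz
    by (simp add: fm fk fj b e1 field_simps)
qed

fun tw :: "real \<Rightarrow> real \<Rightarrow> real \<Rightarrow> real \<Rightarrow> nat \<Rightarrow> tile \<Rightarrow> real" where
  "tw q r s x p White = x"
| "tw q r s x p Black = q ^ (p + 1) * r * x"
| "tw q r s x p Domino = q ^ (p + 1) * s"

lemma tiling_len_Cons[simp]: "tiling_len (t # ts) = tile_len t + tiling_len ts"
  by (simp add: tiling_len_def)
lemma tiling_len_Nil[simp]: "tiling_len [] = 0"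
  by (simp add: tiling_len_def)
lemma tiling_len_snoc[simp]: "tiling_len (ts @ [t]) = tiling_len ts + tile_len t"
  by (simp add: tiling_len_def)
lemma num_dominoes_snoc[simp]: "num_dominoes (ts @ [t]) = num_dominoes ts + (if t = Domino then 1 else 0)"
  by (simp add: num_dominoes_def)

lemma wr_from_snoc: "wr_from q r s x p (ts @ [t]) = wr_from q r s x p ts * tw q r s x (p + tiling_len ts) t"
proof (induction ts arbitrary: p)
  case Nil thus ?case by (cases t) simp_all
next
  case (Cons a ts) thus ?case by (cases a) (simp_all add: ac_simps)
qed

lemma tile_len_pos: "tile_len t \<ge> 1" by (cases t) auto

lemma length_le_tiling_len: "length ts \<le> tiling_len ts"
proof (induction ts)
  case (Cons a ts) thus ?case using tile_len_pos[of a] by simp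
qed simp

lemma finite_tilings: "finite (tilings n k)"
proof -
  have "tilings n k \<subseteq> {ts. set ts \<subseteq> UNIV \<and> length ts \<le> n}"
    using length_le_tiling_len by (auto simp: tilings_def)
  moreover have "finite {ts::tile list. set ts \<subseteq> {White, Black, Domino} \<and> length ts \<le> n}"
    by (rule finite_lists_length_le) simp
  moreover have "(UNIV :: tile set) = {White, Black, Domino}" using tile.exhaust by auto
  ultimately show ?thesis by (metis finite_subset)
qed

lemma tilings_0: "tilings 0 k = (if k = 0 then {[]} else {})"
proof -
  have z: "tiling_len ts = 0 \<Longrightarrow> ts = []" for ts
    using length_le_tiling_len[of ts] by simp
  show ?thesis
  proof (cases "k = 0")
    case True
    show ?thesis unfolding tilings_def using True z by (auto simp: num_dominoes_def)
  next
    case False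
    have "ts \<notin> tilings 0 k" for ts
    proof
      assume "ts \<in> tilings 0 k"
      hence "ts = []" "num_dominoes ts = k" using z by (auto simp: tilings_def)
      thus False using False by (simp add: num_dominoes_def)
    qed
    thus ?thesis using False by auto
  qed
qed

lemma tilings_Suc: "tilings (Suc n) k =
   (\<lambda>ts. ts @ [White]) ` tilings n k \<union> (\<lambda>ts. ts @ [Black]) ` tilings n k \<union>
   (\<lambda>ts. ts @ [Domino]) ` {ts. ts \<in> tilings (n - 1) (k - 1) \<and> 0 < k \<and> 0 < n}"
  (is "?L = ?R")
proof
  show "?L \<subseteq> ?R"
  proof
    fix ts assume ts: "ts \<in> ?L"
    then have "ts \<noteq> []" by (auto simp: tilings_def)
    then obtain ys t where ys: "ts = ys @ [t]" by (metis rev_exhaust)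
    show "ts \<in> ?R"
      using ts unfolding ys by (cases t) (auto simp: tilings_def)
  qed
next
  show "?R \<subseteq> ?L" by (auto simp: tilings_def)
qed

lemma u_0: "u q x 0 k s r = (if k = 0 then 1 else 0)"
  by (simp add: u_def tilings_0 wr_def)

lemma u_Suc: "u q x (Suc n) k s r = x * (1 + q ^ Suc n * r) * u q x n k s r
   + (if 0 < k \<and> 0 < n then q ^ n * s * u q x (n - 1) (k - 1) s r else 0)"
proof -
  let ?W = "(\<lambda>ts. ts @ [White]) ` tilings n k"
  let ?B = "(\<lambda>ts. ts @ [Black]) ` tilings n k"
  let ?D = "(\<lambda>ts. ts @ [Domino]) ` {ts. ts \<in> tilings (n - 1) (k - 1) \<and> 0 < k \<and> 0 < n}"
  have fin: "finite ?W" "finite ?B" "finite ?D"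
    using finite_tilings by (auto intro: finite_subset[OF _ finite_tilings[of "n-1" "k-1"]])
  have inj: "inj_on (\<lambda>ts. ts @ [t]) A" for t and A :: "tile list set" by (auto simp: inj_on_def)
  have cst: "\<And>c T. (\<Sum>ts\<in>T. wr q r s x ts * c) = c * sum (wr q r s x) T"
    by (simp add: sum_distrib_left mult.commute)
  have "sum (wr q r s x) ?W = (\<Sum>ts\<in>tilings n k. wr q r s x ts * x)"
    unfolding sum.reindex[OF inj] comp_def by (rule sum.cong) (auto simp: wr_def wr_from_snoc)
  also have "\<dots> = x * u q x n k s r" unfolding u_def by (rule cst)
  finally have eW: "sum (wr q r s x) ?W = x * u q x n k s r" .
  have "sum (wr q r s x) ?B = (\<Sum>ts\<in>tilings n k. wr q r s x ts * (q ^ Suc n * r * x))"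
    unfolding sum.reindex[OF inj] comp_def by (rule sum.cong) (auto simp: wr_def wr_from_snoc tilings_def)
  also have "\<dots> = q ^ Suc n * r * x * u q x n k s r" unfolding u_def by (rule cst)
  finally have eB: "sum (wr q r s x) ?B = q ^ Suc n * r * x * u q x n k s r" .
  have eD: "sum (wr q r s x) ?D = (if 0 < k \<and> 0 < n then q ^ n * s * u q x (n - 1) (k - 1) s r else 0)"
  proof (cases "0 < k \<and> 0 < n")
    case True
    then have "?D = (\<lambda>ts. ts @ [Domino]) ` tilings (n - 1) (k - 1)" by auto
    then have "sum (wr q r s x) ?D = (\<Sum>ts\<in>tilings (n-1) (k-1). wr q r s x ts * (q ^ n * s))"
      unfolding sum.reindex[OF inj] comp_def using True
      by (simp only:) (rule sum.cong, auto simp: wr_def wr_from_snoc tilings_def)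
    also have "\<dots> = q ^ n * s * u q x (n-1) (k-1) s r" unfolding u_def by (rule cst)
    finally show ?thesis using True by simp
  next
    case False hence "?D = {}" by blast
    thus ?thesis using False by (simp only: sum.empty if_False)
  qed
  have m1: "u q x (Suc n) k s r = sum (wr q r s x) (?W \<union> ?B \<union> ?D)"
    by (simp add: u_def tilings_Suc)
  have m2: "sum (wr q r s x) (?W \<union> ?B \<union> ?D) = sum (wr q r s x) ?W + sum (wr q r s x) ?B + sum (wr q r s x) ?D"
  proof -
    have d1: "?W \<inter> ?B = {}" "(?W \<union> ?B) \<inter> ?D = {}" by auto
    show ?thesis using fin d1 by (simp add: sum.union_disjoint)
  qed
  have ch: "u q x (Suc n) k s r = x * u q x n k s r + q ^ Suc n * r * x * u q x n k s r
   + (if 0 < k \<and> 0 < n then q ^ n * s * u q x (n - 1) (k - 1) s r else 0)"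
    unfolding m1 m2 eW eB eD ..
  have gen: "\<And>U1 U D::real. U1 = x*U + q^Suc n*r*x*U + D \<Longrightarrow> U1 = x*(1+q^Suc n*r)*U + D"
    by (simp add: ring_distribs ac_simps)
  show ?thesis by (rule gen[OF ch])
qed

lemma alg:
  fixes B1 B0 Bm a b c q r s x A S X :: real
  assumes P1: "B1 = B0 + b*q*Bm" and P2: "B1 = a*q*B0 + Bm"
  shows "c*a^2*q * B1 * (A*(1 + a*q*b*q*r)) * (S*s) * (X*x) =
     x*(1 + a^2*q^3*b*r) * (c*a^2*q*B0*A*(S*s)*X) + a^2*q^2*b*s*(c*Bm*((1+a*q*r)*A)*S*(X*x))"
proof -
  have key: "B1*(1 + a*q*b*q*r) = (B0 + b*q*Bm) + a*q*b*q*r*(a*q*B0 + Bm)"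
  proof -
    have "B1*(1 + a*q*b*q*r) = B1 + a*q*b*q*r*B1" by (simp add: algebra_simps)
    also have "\<dots> = (B0 + b*q*Bm) + a*q*b*q*r*(a*q*B0 + Bm)"
      by (simp only: P1[symmetric] P2[symmetric])
    finally show ?thesis .
  qed
  have "c*a^2*q * B1 * (A*(1 + a*q*b*q*r)) * (S*s) * (X*x) = c*a^2*q*A*S*s*X*x*(B1*(1 + a*q*b*q*r))"
    by (simp add: algebra_simps)
  also have "\<dots> = c*a^2*q*A*S*s*X*x*((B0 + b*q*Bm) + a*q*b*q*r*(a*q*B0 + Bm))"
    by (simp only: key)
  also have "\<dots> = x*(1 + a^2*q^3*b*r) * (c*a^2*q*B0*A*(S*s)*X) + a^2*q^2*b*s*(c*Bm*((1+a*q*r)*A)*S*(X*x))"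
    by (simp add: algebra_simps power2_eq_square power3_eq_cube)
  finally show ?thesis .
qed

definition Fx :: "real \<Rightarrow> real \<Rightarrow> real \<Rightarrow> real \<Rightarrow> nat \<Rightarrow> nat \<Rightarrow> real" where
  "Fx q r s x n k = q ^ (k\<^sup>2) * qbinom q (n - k) k * (\<Prod>i=k+1..n-k. 1 + q ^ i * r) * s ^ k * x ^ (n - 2 * k)"

lemma Fx_rec:
  fixes q r s x :: real
  assumes q: "q \<noteq> -1"
  shows "Fx q r s x (2*Suc k' + j + 1) (Suc k') =
    x * (1 + q ^ (2*Suc k' + j + 1) * r) * Fx q r s x (2*Suc k' + j) (Suc k')
    + q ^ (2*Suc k' + j) * s * Fx q r s x (2*k' + j + 1) k'"
proof -
  define f where "f i = 1 + q ^ i * r" for i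
  define A where "A = (\<Prod>i=Suc k'+1..Suc k'+j. f i)"
  have i1: "2*Suc k'+j+1 - Suc k' = Suc k' + j + 1" "2*Suc k'+j+1 - 2*Suc k' = Suc j"
    "2*Suc k'+j - Suc k' = Suc k' + j" "2*Suc k'+j - 2*Suc k' = j"
    "2*k'+j+1 - k' = Suc k' + j" "2*k'+j+1 - 2*k' = j+1" by auto
  have pr1: "(\<Prod>i=Suc k'+1..Suc k'+j+1. f i) = A * f (Suc k'+j+1)"
    unfolding A_def by (simp add: add.commute)
  have pr2: "(\<Prod>i=k'+1..Suc k'+j. f i) = f (Suc k') * A"
    unfolding A_def by (subst prod.atLeast_Suc_atMost) auto
  have pw: "q ^ ((Suc k')\<^sup>2) = q^(k'\<^sup>2) * (q^k')^2 * q"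
    "q ^ (2*Suc k' + j + 1) = (q^k')^2 * q^3 * q^j"
    "q ^ (2*Suc k' + j) = (q^k')^2 * q^2 * q^j"
    "q ^ (Suc k' + j + 1) = q^k' * q * q^j * q"
    "q ^ (Suc k') = q^k' * q" "q ^ (j+1) = q^j * q"
    "s ^ Suc k' = s^k' * s" "x ^ Suc j = x^j * x" "x ^ (j+1) = x^j * x"
    by (simp_all add: power2_eq_square power3_eq_cube power_add power_mult algebra_simps)
  have P1: "qbinom q (Suc k' + j + 1) (Suc k') = qbinom q (Suc k'+j) (Suc k') + q^j * q * qbinom q (Suc k'+j) k'"
    using pascal(1)[OF q, of k' j] by (simp only: pw)
  have P2: "qbinom q (Suc k' + j + 1) (Suc k') = q^k' * q * qbinom q (Suc k'+j) (Suc k') + qbinom q (Suc k'+j) k'"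
    using pascal(2)[OF q, of k' j] by (simp only: pw)
  have fS: "f (Suc k' + j + 1) = 1 + q^k' * q * q^j * q * r" "f (Suc k') = 1 + q^k' * q * r"
    unfolding f_def by (simp_all only: pw)
  show ?thesis
    unfolding Fx_def i1 f_def[symmetric] pr1 pr2 fS pw A_def[symmetric]
    by (rule alg[OF P1 P2])
qed


lemma Fx0: "q \<noteq> -1 \<Longrightarrow> Fx q r s x n 0 = (\<Prod>i=1..n. 1 + q ^ i * r) * x ^ n"
  by (simp add: Fx_def qbinom_0)

lemma Fxdiag: "q \<noteq> -1 \<Longrightarrow> Fx q r s x (2*k) k = q ^ (k\<^sup>2) * s ^ k"
proof -
  assume q: "q \<noteq> -1"
  have "2*k - k = k" "2*k - 2*k = 0" by auto
  thus ?thesis by (simp add: Fx_def qbinom_diag[OF q])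
qed

lemma main:
  fixes q r s x :: real
  assumes q: "q \<noteq> -1"
  shows "u q x n k s r = (if k \<le> n div 2 then Fx q r s x n k else 0)"
proof (induction n arbitrary: k rule: less_induct)
  case (less n)
  consider "n = 0" | "n = 1" | n1 where "n = Suc (Suc n1)"
    by (metis One_nat_def not0_implies_Suc)
  then show ?case
  proof cases
    case 1
    then show ?thesis by (simp add: u_0 Fx_def qbinom_0[OF q])
  next
    case 2
    have "u q x 1 k s r = x * (1 + q * r) * u q x 0 k s r" using u_Suc[of q x 0 k s r] by simp
    then show ?thesis using 2 by (simp add: u_0 Fx0[OF q] algebra_simps)
  next
    case 3
    define n' where "n' = Suc n1"
    have n: "n = Suc n'" using 3 n'_def by simp
    have IH1: "u q x n' k' s r = (if k' \<le> n' div 2 then Fx q r s x n' k' else 0)" for k'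
      using less n by simp
    have IH2: "u q x n1 k' s r = (if k' \<le> n1 div 2 then Fx q r s x n1 k' else 0)" for k'
      using less n n'_def by simp
    have rec: "u q x n k s r = x * (1 + q ^ Suc n' * r) * u q x n' k s r
       + (if 0 < k then q ^ n' * s * u q x n1 (k - 1) s r else 0)"
      using u_Suc[of q x n' k s r] n n'_def by simp
    show ?thesis
    proof (cases k)
      case 0
      have "Fx q r s x n 0 = x * (1 + q ^ Suc n' * r) * Fx q r s x n' 0"
        unfolding n Fx0[OF q] by (simp add: algebra_simps)
      then show ?thesis using rec IH1[of 0] 0 by simp
    next
      case (Suc k')
      consider "n < 2*k" | "n = 2*k" | "2*k < n" by linarith
      then show ?thesis
      proof cases
        case 1
        then show ?thesis using rec IH1[of k] IH2[of k'] Suc n n'_def by auto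
      next
        case 2
        have a: "n' = 2*k' + 1" "n1 = 2*k'" using 2 Suc n n'_def by auto
        have n2: "n = 2 * Suc k'" using 2 Suc by simp
        have "Fx q r s x n k = q ^ n' * s * Fx q r s x n1 k'"
          unfolding n2 Suc a Fxdiag[OF q, of r s x "Suc k'"] Fxdiag[OF q, of r s x k']
          by (simp add: power2_eq_square power_add power_mult algebra_simps)
        then show ?thesis using rec IH1[of k] IH2[of k'] n a 2 by (simp add: Suc)
      next
        case 3
        define j where "j = n - 2*k - 1"
        have a: "n = 2*Suc k' + j + 1" "n' = 2*Suc k' + j" "n1 = 2*k' + j + 1"
          using 3 Suc n n'_def j_def by auto
        have "Fx q r s x n k = x * (1 + q ^ Suc n' * r) * Fx q r s x n' k + q ^ n' * s * Fx q r s x n1 k'"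
          using Fx_rec[OF q, of r s x k' j] a Suc by simp
        moreover have "k \<le> n' div 2" "k' \<le> n1 div 2" "k \<le> n div 2" using a Suc by auto
        ultimately show ?thesis using rec IH1[of k] IH2[of k'] Suc by simp
      qed
    qed
  qed
qed

theorem theorem2p2:
  fixes q r s x :: real and n k :: nat
  assumes "q \<noteq> -1"
  shows "u q x n k s r =
    (if k \<le> n div 2 then
       q ^ (k\<^sup>2) * qbinom q (n - k) k * (\<Prod>i=k+1..n-k. 1 + q ^ i * r) * s ^ k * x ^ (n - 2 * k)
     else 0)"
  using main[OF assms, of x n k s r] by (simp only: Fx_def)

end
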